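(* Let $X$ be a compact zero-dimensional metric space, $X_{\max},X_{\min}\subseteq X$ closed subsets, and $\varphi:X\setminus X_{\max}\to X\setminus X_{\min}$ a homeomorphism. Then the following are equivalent: (i) for every clopen $U\subseteq X$ with $X_{\min}\subseteq U$, $\bigcup_{n=0}^{\infty}\varphi^n(U)=X$; (ii) for every clopen $V\subseteq X$ with $X_{\max}\subseteq V$, $\bigcup_{n=0}^{\infty}\varphi^{-n}(V)=X$.
   Context: For $n\in\mathbb{Z}$, $\varphi^n$ denotes the $n$-fold composite of $\varphi$ (of $\varphi^{-1}$ if $n<0$) on its natural domain, $\varphi^0=\mathrm{id}_X$, and for $U\subseteq X$, $\varphi^n(U)=\varphi^n(U\cap\mathrm{dom}\,\varphi^n)$. *)

theory Defs
  imports "HOL-Analysis.Analysis"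
begin

text \<open>Image of a set under the n-fold partial composite of a partial map f with domain D:
  f^0(U) = U, and f^(n+1)(U) = f(f^n(U) \<inter> D).\<close>
primrec pimg :: "('a \<Rightarrow> 'a) \<Rightarrow> 'a set \<Rightarrow> nat \<Rightarrow> 'a set \<Rightarrow> 'a set" where
  "pimg f D 0 U = U"
| "pimg f D (Suc n) U = f ` (pimg f D n U \<inter> D)"

end

theory Submission
  imports Defs
begin

lemma pimg_cong:
  assumes "\<And>x. x \<in> D \<Longrightarrow> f x = g x"
  shows "pimg f D n U = pimg g D n U"
  using assms by (induction n) (auto simp: image_def)

lemma pimg_mono:
  assumes "U \<subseteq> U'"
  shows "pimg f D n U \<subseteq> pimg f D n U'"
  using assms by (induction n) auto

lemma key:
  fixes X A B :: "'a::metric_space set" and f g :: "'a \<Rightarrow> 'a"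
  assumes X: "compact X"
    and dim: "(top_of_set X) dim_le 0"
    and A: "closed A" "A \<subseteq> X"
    and B: "closed B" "B \<subseteq> X"
    and hom: "homeomorphism (X - A) (X - B) f g"
    and Uo: "openin (top_of_set X) U" and Uc: "closedin (top_of_set X) U" and BU: "B \<subseteq> U"
    and ne: "(\<Union>n. pimg f (X - A) n U) \<noteq> X"
  shows "\<exists>V. openin (top_of_set X) V \<and> closedin (top_of_set X) V \<and> A \<subseteq> V
            \<and> (\<Union>n. pimg g (X - B) n V) \<noteq> X"
proof -
  define D where "D = X - A"
  define E where "E = X - B"
  have hom': "homeomorphism D E f g" using hom by (simp add: D_def E_def)
  have fD: "f ` D = E" and gE: "g ` E = D" and gf: "\<And>x. x \<in> D \<Longrightarrow> g (f x) = x"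
    and fg: "\<And>y. y \<in> E \<Longrightarrow> f (g y) = y" and gc: "continuous_on E g"
    using hom' by (auto simp: homeomorphism_def)
  have DX: "D \<subseteq> X" and EX: "E \<subseteq> X" by (auto simp: D_def E_def)
  have Do: "openin (top_of_set X) D" unfolding D_def using A
    by (intro openin_diff openin_subtopology_self closed_subset) auto
  have Eo: "openin (top_of_set X) E" unfolding E_def using B
    by (intro openin_diff openin_subtopology_self closed_subset) auto
  define W where "W = (\<Union>n. pimg f D n U)"
  have Wn_open: "openin (top_of_set X) (pimg f D n U)" for n
  proof (induction n)
    case 0 then show ?case using Uo by simp
  next
    case (Suc n)
    have "openin (top_of_set X) (pimg f D n U \<inter> D)" using Suc Do by blast
    then have "openin (top_of_set D) (pimg f D n U \<inter> D)"
      by (meson DX inf_le2 openin_subset_trans)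
    then have "openin (top_of_set E) (f ` (pimg f D n U \<inter> D))"
      using homeomorphism_imp_open_map[OF hom'] by blast
    then show ?case using Eo by (simp add: openin_trans)
  qed
  have Wo: "openin (top_of_set X) W" unfolding W_def using Wn_open by blast
  have UX: "U \<subseteq> X" using Uo openin_imp_subset by blast
  have WnX: "pimg f D n U \<subseteq> X" for n
    using Wn_open openin_imp_subset by blast
  have WX: "W \<subseteq> X" using WnX W_def by blast
  have Wfwd: "x \<in> W \<Longrightarrow> x \<in> D \<Longrightarrow> f x \<in> W" for x
  proof -
    assume "x \<in> W" "x \<in> D"
    then obtain n where "x \<in> pimg f D n U" unfolding W_def by blast
    then have "f x \<in> pimg f D (Suc n) U" using \<open>x \<in> D\<close> by simp
    then show "f x \<in> W" unfolding W_def by blast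
  qed
  define C where "C = X - W"
  have Cne: "C \<noteq> {}" using ne WX unfolding C_def W_def D_def by blast
  have Ccl: "closedin (top_of_set X) C" unfolding C_def using Wo
    by (intro closedin_diff closedin_topspace[of "top_of_set X", simplified]) auto
  have Ccomp: "compact C"
    using Ccl X by (metis closedin_closed compact_Int_closed inf_commute)
  have BW: "B \<subseteq> W" using BU unfolding W_def by (metis UNIV_I UN_upper pimg.simps(1) subset_trans)
  have CE: "C \<subseteq> E" using BW unfolding C_def E_def by blast
  have gC: "g ` (C \<inter> E) \<subseteq> C"
  proof
    fix y assume "y \<in> g ` (C \<inter> E)"
    then obtain x where x: "x \<in> C" "x \<in> E" "y = g x" by blast
    have yD: "y \<in> D" using x gE by blast
    have "y \<notin> W"
    proof
      assume "y \<in> W"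
      then have "f y \<in> W" using Wfwd yD by blast
      then show False using x fg unfolding C_def by auto
    qed
    then show "y \<in> C" using yD DX unfolding C_def by blast
  qed
  define K where "K n = pimg g E n C" for n
  have Kdec: "K (Suc n) \<subseteq> K n" for n
  proof (induction n)
    case 0 then show ?case using gC by (simp add: K_def)
  next
    case (Suc n) then show ?case unfolding K_def by auto
  qed
  have KC: "K n \<subseteq> C" for n
    by (induction n) (use Kdec in \<open>auto simp: K_def\<close>)
  have KE: "K n \<subseteq> E" for n using KC CE by blast
  have Kanti: "m \<le> n \<Longrightarrow> K n \<subseteq> K m" for m n
    by (induction n rule: dec_induct) (use Kdec in auto)
  have Kprop: "compact (K n) \<and> K n \<noteq> {}" for n
  proof (induction n)
    case 0 then show ?case using Ccomp Cne by (simp add: K_def)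
  next
    case (Suc n)
    have eq: "K (Suc n) = g ` K n" using KE[of n] by (auto simp: K_def)
    have "compact (g ` K n)"
      using Suc KE[of n] gc by (meson compact_continuous_image continuous_on_subset)
    then show ?case using eq Suc by auto
  qed
  define C' where "C' = (\<Inter>n. K n)"
  have C'ne: "C' \<noteq> {}"
  proof -
    have "K 0 \<inter> (\<Inter>i\<in>UNIV. K i) \<noteq> {}"
    proof (rule compact_imp_fip_image)
      show "compact (K 0)" using Kprop by blast
      show "closed (K i)" for i using Kprop compact_imp_closed by blast
      fix I' :: "nat set" assume "finite I'"
      define m where "m = Max (insert 0 I')"
      have "\<forall>i\<in>insert 0 I'. i \<le> m" using \<open>finite I'\<close> m_def by simp
      then have "K m \<subseteq> K 0 \<inter> (\<Inter>i\<in>I'. K i)" using Kanti by blast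
      then show "K 0 \<inter> (\<Inter>i\<in>I'. K i) \<noteq> {}" using Kprop[of m] by blast
    qed
    then show ?thesis unfolding C'_def by blast
  qed
  have C'comp: "compact C'"
  proof -
    have "C' = K 0 \<inter> (\<Inter>n. K n)" unfolding C'_def by blast
    moreover have "compact (K 0 \<inter> (\<Inter>n. K n))"
      using Kprop by (intro compact_Int_closed closed_INT) (auto intro: compact_imp_closed)
    ultimately show ?thesis by simp
  qed
  have C'D: "C' \<subseteq> D"
  proof
    fix x assume "x \<in> C'"
    then have "x \<in> K 1" unfolding C'_def by blast
    then show "x \<in> D" using gE KE by (auto simp: K_def)
  qed
  have C'X: "C' \<subseteq> X" using C'D DX by blast
  have C'f: "x \<in> C' \<Longrightarrow> f x \<in> C'" for x
  proof -
    assume x: "x \<in> C'"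
    have "f x \<in> K n" for n
    proof -
      have "x \<in> K (Suc n)" using x unfolding C'_def by blast
      then obtain y where "y \<in> K n" "y \<in> E" "x = g y" by (auto simp: K_def)
      then show ?thesis using fg by simp
    qed
    then show ?thesis unfolding C'_def by blast
  qed
  have AC': "A \<inter> C' = {}" using C'D unfolding D_def by blast
  have Acomp: "compact A" using A X by (metis compact_Int_closed inf.absorb_iff2)
  have loc: "\<exists>T. open T \<and> x \<in> T \<and> openin (top_of_set X) (X \<inter> T) \<and> closedin (top_of_set X) (X \<inter> T) \<and> X \<inter> T \<inter> C' = {}"
    if "x \<in> A" for x
  proof -
    have "openin (top_of_set X) (X - C')"
      using C'comp C'X by (intro openin_diff openin_subtopology_self closed_subset) (auto intro: compact_imp_closed)
    moreover have "x \<in> X - C'" using that A AC' by blast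
    ultimately obtain Q where Q: "closedin (top_of_set X) Q" "openin (top_of_set X) Q" "x \<in> Q" "Q \<subseteq> X - C'"
      using dim by (force simp add: dimension_le_0_neighbourhood_base_of_clopen open_neighbourhood_base_of)
    then obtain T where "open T" "Q = X \<inter> T" by (meson openin_open)
    then show ?thesis using Q by blast
  qed
  then obtain T where T: "\<And>x. x \<in> A \<Longrightarrow> open (T x) \<and> x \<in> T x \<and> openin (top_of_set X) (X \<inter> T x)
      \<and> closedin (top_of_set X) (X \<inter> T x) \<and> X \<inter> T x \<inter> C' = {}"
    by metis
  obtain F where F: "F \<subseteq> A" "finite F" "A \<subseteq> (\<Union>c\<in>F. T c)"
    using compactE_image[OF Acomp, of A T] T by blast
  define V where "V = (\<Union>c\<in>F. X \<inter> T c)"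
  have Vo: "openin (top_of_set X) V" unfolding V_def using T F by blast
  have Vc: "closedin (top_of_set X) V" unfolding V_def using T F
    by (intro closedin_Union) auto
  have AV: "A \<subseteq> V" unfolding V_def using F A by blast
  have VC': "V \<inter> C' = {}" unfolding V_def using T F by blast
  have disj: "pimg g E n V \<inter> C' = {}" for n
  proof (induction n)
    case 0 then show ?case using VC' by simp
  next
    case (Suc n)
    show ?case
    proof (rule ccontr)
      assume "pimg g E (Suc n) V \<inter> C' \<noteq> {}"
      then obtain y where y: "y \<in> pimg g E n V" "y \<in> E" "g y \<in> C'" by auto
      then have "f (g y) \<in> C'" using C'f by blast
      then show False using y fg Suc by auto
    qed
  qed
  obtain x where "x \<in> C'" using C'ne by blast
  then have "x \<notin> (\<Union>n. pimg g E n V)" "x \<in> X" using disj C'X by blast+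
  then have "(\<Union>n. pimg g (X - B) n V) \<noteq> X" unfolding E_def by blast
  then show ?thesis using Vo Vc AV by blast
qed

theorem proposition4p5:
  fixes X Xmax Xmin :: "'a::metric_space set" and \<phi> :: "'a \<Rightarrow> 'a"
  assumes "compact X"
    and "(top_of_set X) dim_le 0"
    and "closed Xmax" and "Xmax \<subseteq> X"
    and "closed Xmin" and "Xmin \<subseteq> X"
    and "\<exists>\<psi>. homeomorphism (X - Xmax) (X - Xmin) \<phi> \<psi>"
  shows "(\<forall>U. openin (top_of_set X) U \<and> closedin (top_of_set X) U \<and> Xmin \<subseteq> U
            \<longrightarrow> (\<Union>n. pimg \<phi> (X - Xmax) n U) = X)
     \<longleftrightarrow> (\<forall>V. openin (top_of_set X) V \<and> closedin (top_of_set X) V \<and> Xmax \<subseteq> V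
            \<longrightarrow> (\<Union>n. pimg (inv_into (X - Xmax) \<phi>) (X - Xmin) n V) = X)"
proof -
  obtain \<psi> where h: "homeomorphism (X - Xmax) (X - Xmin) \<phi> \<psi>" using assms(7) by blast
  have h': "homeomorphism (X - Xmin) (X - Xmax) \<psi> \<phi>" using h homeomorphism_sym by blast
  have eq: "pimg (inv_into (X - Xmax) \<phi>) (X - Xmin) n V = pimg \<psi> (X - Xmin) n V" for n V
  proof (rule pimg_cong)
    fix x assume x: "x \<in> X - Xmin"
    then have "\<psi> x \<in> X - Xmax" "\<phi> (\<psi> x) = x" using h by (auto simp: homeomorphism_def)
    moreover have "inj_on \<phi> (X - Xmax)" using h by (metis homeomorphism_def inj_on_inverseI)
    ultimately show "inv_into (X - Xmax) \<phi> x = \<psi> x" by (metis inv_into_f_f)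
  qed
  show ?thesis
  proof
    assume L: "\<forall>U. openin (top_of_set X) U \<and> closedin (top_of_set X) U \<and> Xmin \<subseteq> U
            \<longrightarrow> (\<Union>n. pimg \<phi> (X - Xmax) n U) = X"
    show "\<forall>V. openin (top_of_set X) V \<and> closedin (top_of_set X) V \<and> Xmax \<subseteq> V
            \<longrightarrow> (\<Union>n. pimg (inv_into (X - Xmax) \<phi>) (X - Xmin) n V) = X"
    proof (rule ccontr)
      assume "\<not> ?thesis"
      then obtain V where "openin (top_of_set X) V" "closedin (top_of_set X) V" "Xmax \<subseteq> V"
        "(\<Union>n. pimg \<psi> (X - Xmin) n V) \<noteq> X" using eq by auto
      from key[OF assms(1,2,5,6,3,4) h' this] L show False by blast
    qed
  next
    assume R: "\<forall>V. openin (top_of_set X) V \<and> closedin (top_of_set X) V \<and> Xmax \<subseteq> V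
            \<longrightarrow> (\<Union>n. pimg (inv_into (X - Xmax) \<phi>) (X - Xmin) n V) = X"
    show "\<forall>U. openin (top_of_set X) U \<and> closedin (top_of_set X) U \<and> Xmin \<subseteq> U
            \<longrightarrow> (\<Union>n. pimg \<phi> (X - Xmax) n U) = X"
    proof (rule ccontr)
      assume "\<not> ?thesis"
      then obtain U where "openin (top_of_set X) U" "closedin (top_of_set X) U" "Xmin \<subseteq> U"
        "(\<Union>n. pimg \<phi> (X - Xmax) n U) \<noteq> X" by auto
      from key[OF assms(1,2,3,4,5,6) h this] R eq show False by auto
    qed
  qed
qed

end
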